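(* Let $A$ be a finite alphabet. If the sliding block code $\phi: A^{\mathbb{N}} \to A^{\mathbb{N}}$ is a local homeomorphism that $*$-commutes with the shift map $\sigma$, then $\phi$ is surjective and there exists $k \in \mathbb{N}$ such that $\phi$ is $k$-to-$1$ (every point of $A^{\mathbb{N}}$ has exactly $k$ preimages under $\phi$).
   Context: $A$ is a finite set with the discrete topology; $\mathbb{N}=\{1,2,3,\dots\}$; $A^{\mathbb{N}}$ is the space of one-sided infinite sequences over $A$ with the product topology; $\sigma(x_1x_2x_3\cdots)=x_2x_3\cdots$. A sliding block code is a map $\tau_d: A^{\mathbb{N}}\to A^{\mathbb{N}}$, $\tau_d(x)_i=d(x_i\cdots x_{i+n-1})$, for some $n\in\mathbb{N}$ and function $d:A^n\to A$. A continuous map $f:X\to Y$ is a local homeomorphism if every $x\in X$ has an open neighborhood $U$ such that $f(U)$ is open in $Y$ and $f:U\to f(U)$ is a homeomorphism. Two functions $S,T: X\to X$ $*$-commute if $ST=TS$ and for every $(y,z)$ with $S(y)=T(z)$ there exists a unique $x$ with $T(x)=y$ and $S(x)=z$. *)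

theory Defs
  imports "HOL-Analysis.Analysis"
begin

(* One-sided sequences x_1 x_2 ... are encoded as functions nat => 'a, index i+1 stored at i. *)

definition seq_top :: "(nat \<Rightarrow> 'a) topology" where
  "seq_top = product_topology (\<lambda>_. discrete_topology (UNIV :: 'a set)) (UNIV :: nat set)"

definition shift :: "(nat \<Rightarrow> 'a) \<Rightarrow> (nat \<Rightarrow> 'a)" where
  "shift x = (\<lambda>i. x (Suc i))"

definition sliding_block_code :: "((nat \<Rightarrow> 'a) \<Rightarrow> (nat \<Rightarrow> 'a)) \<Rightarrow> bool" where
  "sliding_block_code \<phi> \<longleftrightarrow>
     (\<exists>(n::nat) (d :: 'a list \<Rightarrow> 'a). n \<ge> 1 \<and>
        (\<forall>x i. \<phi> x i = d (map x [i..<i+n])))"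

definition local_homeomorphism :: "'a topology \<Rightarrow> 'b topology \<Rightarrow> ('a \<Rightarrow> 'b) \<Rightarrow> bool" where
  "local_homeomorphism X Y f \<longleftrightarrow> continuous_map X Y f \<and>
     (\<forall>x \<in> topspace X. \<exists>U. openin X U \<and> x \<in> U \<and> openin Y (f ` U) \<and>
        homeomorphic_map (subtopology X U) (subtopology Y (f ` U)) f)"

definition star_commute :: "('a \<Rightarrow> 'a) \<Rightarrow> ('a \<Rightarrow> 'a) \<Rightarrow> bool" where
  "star_commute S T \<longleftrightarrow> S \<circ> T = T \<circ> S \<and>
     (\<forall>y z. S y = T z \<longrightarrow> (\<exists>!x. T x = y \<and> S x = z))"

end

theory Submission
  imports Defs
begin

lemma topspace_seq_top[simp]: "topspace (seq_top :: (nat \<Rightarrow> 'a) topology) = UNIV"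
  unfolding seq_top_def by (simp add: topspace_product_topology PiE_UNIV_domain)

lemma cyl_open: "openin (seq_top :: (nat \<Rightarrow> 'a) topology) {x. \<forall>i<M. x i = c i}"
proof -
  have eq: "{x. \<forall>i<M. x i = c i} = PiE UNIV (\<lambda>i. if i < M then {c i} else (UNIV::'a set))"
    by (auto simp: PiE_UNIV_domain Pi_iff split: if_splits)
  have fin: "finite {i. (if i < M then {c i} else (UNIV::'a set)) \<noteq> UNIV}"
    by (rule finite_subset[of _ "{..<M}"]) auto
  show ?thesis unfolding eq seq_top_def
    by (subst openin_PiE_gen) (use fin in auto)
qed

lemma open_cyl:
  assumes "openin (seq_top :: (nat \<Rightarrow> 'a) topology) S" "y \<in> S"
  shows "\<exists>L. \<forall>y'. (\<forall>i<L. y' i = y i) \<longrightarrow> y' \<in> S"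
proof -
  obtain U where U: "finite {i. U i \<noteq> (UNIV::'a set)}" "y \<in> PiE UNIV U" "PiE UNIV U \<subseteq> S"
    using assms unfolding seq_top_def openin_product_topology_alt by fastforce
  obtain L where L: "\<And>i. i \<in> {i. U i \<noteq> UNIV} \<Longrightarrow> i < L"
    using U(1) by (metis finite_nat_set_iff_bounded)
  show ?thesis
  proof (intro exI allI impI)
    fix y' :: "nat \<Rightarrow> 'a" assume h: "\<forall>i<L. y' i = y i"
    have "y' \<in> PiE UNIV U"
    proof (auto simp: PiE_UNIV_domain)
      fix i show "y' i \<in> U i"
      proof (cases "i < L")
        case True then show ?thesis using h U(2) by (auto simp: PiE_UNIV_domain)
      next
        case False then show ?thesis using L by fastforce
      qed
    qed
    then show "y' \<in> S" using U(3) by blast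
  qed
qed

lemma seq_compact: "compact_space (seq_top :: (nat \<Rightarrow> 'a::finite) topology)"
  unfolding seq_top_def by (simp add: compact_space_product_topology compact_space_discrete_topology)

lemma seq_closed_singleton: "closedin (seq_top :: (nat \<Rightarrow> 'a) topology) {y}"
proof -
  have "Hausdorff_space (seq_top :: (nat \<Rightarrow> 'a) topology)"
    unfolding seq_top_def by (simp add: Hausdorff_space_product_topology)
  then show ?thesis
    by (metis Hausdorff_imp_t1_space t1_space_closedin_singleton topspace_seq_top UNIV_I)
qed


lemma lh_inj:
  assumes lh: "local_homeomorphism seq_top seq_top (\<phi> :: (nat \<Rightarrow> 'a) \<Rightarrow> (nat \<Rightarrow> 'a))"
  shows "\<exists>U. openin seq_top U \<and> x \<in> U \<and> inj_on \<phi> U \<and>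
     (\<forall>W. openin seq_top W \<and> W \<subseteq> U \<longrightarrow> openin seq_top (\<phi> ` W))"
proof -
  obtain U where U: "openin seq_top U" "x \<in> U" "openin seq_top (\<phi> ` U)"
    "homeomorphic_map (subtopology seq_top U) (subtopology seq_top (\<phi> ` U)) \<phi>"
    using lh unfolding local_homeomorphism_def by auto
  have "inj_on \<phi> U" using homeomorphic_imp_injective_map[OF U(4)] by simp
  moreover have "openin seq_top (\<phi> ` W)" if "openin seq_top W" "W \<subseteq> U" for W
  proof -
    have "openin (subtopology seq_top U) W"
      unfolding openin_subtopology using that by (intro exI[of _ W]) auto
    then have "openin (subtopology seq_top (\<phi> ` U)) (\<phi> ` W)"
      using homeomorphic_imp_open_map[OF U(4)] unfolding open_map_def by blast
    then show ?thesis using openin_trans_full[OF _ U(3)] by simp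
  qed
  ultimately show ?thesis using U by blast
qed

lemma fib_finite:
  assumes lh: "local_homeomorphism seq_top seq_top (\<phi> :: (nat \<Rightarrow> 'a::finite) \<Rightarrow> (nat \<Rightarrow> 'a))"
  shows "finite {x. \<phi> x = y}"
proof -
  let ?F = "{x. \<phi> x = y}"
  have cont: "continuous_map seq_top seq_top \<phi>" using lh unfolding local_homeomorphism_def by blast
  have "closedin seq_top ?F"
    using closedin_continuous_map_preimage[OF cont seq_closed_singleton[of y]] by simp
  then have cpt: "compactin seq_top ?F" using closedin_compact_space seq_compact by blast
  have "\<forall>x. \<exists>U. openin seq_top U \<and> x \<in> U \<and> inj_on \<phi> U" using lh_inj[OF lh] by (meson)
  then obtain Uf where "\<forall>x. openin seq_top (Uf x) \<and> x \<in> Uf x \<and> inj_on \<phi> (Uf x)"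
    by (rule choice_iff[THEN iffD1, elim_format]) blast
  then have Uf: "\<And>x. openin seq_top (Uf x)" "\<And>x. x \<in> Uf x" "\<And>x. inj_on \<phi> (Uf x)"
    by auto
  have cov: "?F \<subseteq> \<Union>(Uf ` ?F)" using Uf(2) by blast
  have opn: "\<forall>U\<in>Uf ` ?F. openin seq_top U" using Uf(1) by blast
  have c2: "\<forall>\<U>. (\<forall>U\<in>\<U>. openin seq_top U) \<and> ?F \<subseteq> \<Union>\<U> \<longrightarrow> (\<exists>\<F>. finite \<F> \<and> \<F> \<subseteq> \<U> \<and> ?F \<subseteq> \<Union>\<F>)"
    using cpt[unfolded compactin_def] by (rule conjunct2)
  have "\<exists>\<F>. finite \<F> \<and> \<F> \<subseteq> Uf ` ?F \<and> ?F \<subseteq> \<Union>\<F>"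
    using c2[rule_format, OF conjI[OF opn cov]] .
  then obtain \<F> where F0: "finite \<F> \<and> \<F> \<subseteq> Uf ` ?F \<and> ?F \<subseteq> \<Union>\<F>" ..
  note F = F0[THEN conjunct1] F0[THEN conjunct2, THEN conjunct1] F0[THEN conjunct2, THEN conjunct2]
  obtain T where T: "T \<subseteq> ?F" "finite T" "\<F> = Uf ` T"
    using finite_subset_image[OF F(1,2)] by blast
  have "?F \<subseteq> T"
  proof
    fix x assume x: "x \<in> ?F"
    then obtain t where t: "t \<in> T" "x \<in> Uf t" using F(3) T(3) by blast
    then have "\<phi> t = \<phi> x" using T(1) x by auto
    then have "x = t" using Uf(2)[of t] Uf(3)[of t] t unfolding inj_on_def by blast
    then show "x \<in> T" using t by simp
  qed
  then show ?thesis using T(2) finite_subset by blast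
qed


lemma fib_shift:
  assumes sc: "star_commute \<phi> shift"
  shows "card {x. \<phi> x = y} = card {x. \<phi> x = shift y}"
proof -
  have comm: "\<And>x. \<phi> (shift x) = shift (\<phi> x)"
    using sc unfolding star_commute_def by (metis comp_apply)
  have uniq: "\<And>a b. \<phi> a = shift b \<Longrightarrow> \<exists>!x. shift x = a \<and> \<phi> x = b"
    using sc unfolding star_commute_def by blast
  have "bij_betw shift {x. \<phi> x = y} {x. \<phi> x = shift y}"
    unfolding bij_betw_def inj_on_def
  proof (intro conjI ballI impI equalityI subsetI)
    fix x x' assume x: "x \<in> {x. \<phi> x = y}" and x': "x' \<in> {x. \<phi> x = y}" and e: "shift x = shift x'"
    have "\<phi> (shift x) = shift y" using comm x by simp
    from uniq[OF this] show "x = x'" using x x' e by auto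
  next
    fix w assume "w \<in> shift ` {x. \<phi> x = y}"
    then show "w \<in> {x. \<phi> x = shift y}" using comm by auto
  next
    fix w assume "w \<in> {x. \<phi> x = shift y}"
    then have "\<phi> w = shift y" by simp
    from uniq[OF this] obtain x where "shift x = w" "\<phi> x = y" by blast
    then show "w \<in> shift ` {x. \<phi> x = y}" by blast
  qed
  then show ?thesis by (rule bij_betw_same_card)
qed

lemma fib_tail:
  assumes sc: "star_commute \<phi> shift"
  shows "card {x. \<phi> x = y} = card {x. \<phi> x = (\<lambda>i. y (i + L))}"
proof (induction L)
  case 0 then show ?case by simp
next
  case (Suc L)
  have "shift (\<lambda>i. y (i + L)) = (\<lambda>i. y (i + Suc L))" by (simp add: shift_def)
  then show ?case using Suc fib_shift[OF sc, of "\<lambda>i. y (i + L)"] by simp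
qed

lemma sep_M:
  fixes S :: "(nat \<Rightarrow> 'a) set"
  assumes "finite S"
  shows "\<exists>M. \<forall>x\<in>S. \<forall>x'\<in>S. x \<noteq> x' \<longrightarrow> (\<exists>i<M. x i \<noteq> x' i)"
  using assms
proof (induction S rule: finite_induct)
  case empty then show ?case by simp
next
  case (insert a S)
  then obtain M where M: "\<forall>x\<in>S. \<forall>x'\<in>S. x \<noteq> x' \<longrightarrow> (\<exists>i<M. x i \<noteq> x' i)" by blast
  have "\<forall>x'\<in>S. \<exists>i. x' \<noteq> a \<longrightarrow> a i \<noteq> x' i" by (metis ext)
  then obtain wf where wf: "\<forall>x'\<in>S. x' \<noteq> a \<longrightarrow> a (wf x') \<noteq> x' (wf x')" by metis
  define M' where "M' = max M (Suc (Max (insert 0 (wf ` S))))"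
  have le: "\<And>x'. x' \<in> S \<Longrightarrow> wf x' < M'"
  proof -
    fix x' assume "x' \<in> S"
    then have "wf x' \<le> Max (insert 0 (wf ` S))" using insert(1) by simp
    then show "wf x' < M'" unfolding M'_def by linarith
  qed
  have "\<forall>x\<in>insert a S. \<forall>x'\<in>insert a S. x \<noteq> x' \<longrightarrow> (\<exists>i<M'. x i \<noteq> x' i)"
  proof (intro ballI impI)
    fix x x' assume x: "x \<in> insert a S" and x': "x' \<in> insert a S" and ne: "x \<noteq> x'"
    show "\<exists>i<M'. x i \<noteq> x' i"
    proof (cases "x = a")
      case True
      then have "x' \<in> S" "x' \<noteq> a" using x' ne by auto
      then show ?thesis using wf le True by blast
    next
      case F1: False
      show ?thesis
      proof (cases "x' = a")
        case True
        then have "x \<in> S" "x \<noteq> a" using x ne F1 by auto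
        then show ?thesis using wf le True by (metis)
      next
        case False
        then have "x \<in> S" "x' \<in> S" using x x' F1 by auto
        then obtain i where "i < M" "x i \<noteq> x' i" using M ne by blast
        then show ?thesis unfolding M'_def by (intro exI[of _ i]) auto
      qed
    qed
  qed
  then show ?case by blast
qed

lemma fib_lsc:
  assumes lh: "local_homeomorphism seq_top seq_top (\<phi> :: (nat \<Rightarrow> 'a::finite) \<Rightarrow> (nat \<Rightarrow> 'a))"
    and S: "finite S" "S \<subseteq> {x. \<phi> x = y}"
  shows "\<exists>L. \<forall>y'. (\<forall>i<L. y' i = y i) \<longrightarrow> card S \<le> card {x. \<phi> x = y'}"
proof -
  obtain M where M: "\<forall>x\<in>S. \<forall>x'\<in>S. x \<noteq> x' \<longrightarrow> (\<exists>i<M. x i \<noteq> x' i)"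
    using sep_M[OF S(1)] by blast
  have "\<forall>x\<in>S. \<exists>L. \<forall>y'. (\<forall>i<L. y' i = y i) \<longrightarrow> (\<exists>w. (\<forall>i<M. w i = x i) \<and> \<phi> w = y')"
  proof
    fix x assume xS: "x \<in> S"
    obtain U where U: "openin seq_top U" "x \<in> U"
      "\<forall>W. openin seq_top W \<and> W \<subseteq> U \<longrightarrow> openin seq_top (\<phi> ` W)"
      using lh_inj[OF lh, of x] by blast
    let ?W = "U \<inter> {w. \<forall>i<M. w i = x i}"
    have "openin seq_top ?W" by (rule openin_Int[OF U(1) cyl_open])
    then have op: "openin seq_top (\<phi> ` ?W)" using U(3) by blast
    have "y \<in> \<phi> ` ?W" using xS S(2) U(2) by auto
    from open_cyl[OF op this] obtain L where L: "\<forall>y'. (\<forall>i<L. y' i = y i) \<longrightarrow> y' \<in> \<phi> ` ?W"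
      by blast
    show "\<exists>L. \<forall>y'. (\<forall>i<L. y' i = y i) \<longrightarrow> (\<exists>w. (\<forall>i<M. w i = x i) \<and> \<phi> w = y')"
    proof (intro exI[of _ L] allI impI)
      fix y' assume "\<forall>i<L. y' i = y i"
      then have "y' \<in> \<phi> ` ?W" using L by blast
      then show "\<exists>w. (\<forall>i<M. w i = x i) \<and> \<phi> w = y'" by blast
    qed
  qed
  then obtain Lf where Lf: "\<forall>x\<in>S. \<forall>y'. (\<forall>i<Lf x. y' i = y i) \<longrightarrow> (\<exists>w. (\<forall>i<M. w i = x i) \<and> \<phi> w = y')"
    by metis
  define L where "L = Max (insert 0 (Lf ` S))"
  have Lle: "\<And>x. x \<in> S \<Longrightarrow> Lf x \<le> L" unfolding L_def using S(1) by simp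
  show ?thesis
  proof (intro exI[of _ L] allI impI)
    fix y' assume h: "\<forall>i<L. y' i = y i"
    have "\<forall>x\<in>S. \<exists>w. (\<forall>i<M. w i = x i) \<and> \<phi> w = y'"
    proof
      fix x assume "x \<in> S"
      moreover have "\<forall>i<Lf x. y' i = y i" using h Lle[OF \<open>x \<in> S\<close>] by simp
      ultimately show "\<exists>w. (\<forall>i<M. w i = x i) \<and> \<phi> w = y'" using Lf by blast
    qed
    then obtain g where g: "\<forall>x\<in>S. (\<forall>i<M. g x i = x i) \<and> \<phi> (g x) = y'" by metis
    have inj: "inj_on g S"
    proof (rule inj_onI)
      fix x x' assume "x \<in> S" "x' \<in> S" "g x = g x'"
      then have "\<forall>i<M. x i = x' i" using g by metis
      then show "x = x'" using M \<open>x \<in> S\<close> \<open>x' \<in> S\<close> by blast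
    qed
    have "g ` S \<subseteq> {x. \<phi> x = y'}" using g by auto
    then show "card S \<le> card {x. \<phi> x = y'}"
      using card_inj_on_le[OF inj _ fib_finite[OF lh]] by blast
  qed
qed


theorem proposition5p8:
  fixes \<phi> :: "(nat \<Rightarrow> 'a::finite) \<Rightarrow> (nat \<Rightarrow> 'a)"
  assumes "sliding_block_code \<phi>"
    and "local_homeomorphism seq_top seq_top \<phi>"
    and "star_commute \<phi> shift"
  shows "surj \<phi> \<and> (\<exists>k::nat. k \<ge> 1 \<and>
           (\<forall>y. finite {x. \<phi> x = y} \<and> card {x. \<phi> x = y} = k))"
proof -
  note lh = assms(2) and sc = assms(3)
  define N where "N y = card {x. \<phi> x = y}" for y
  define m where "m = (LEAST k. \<exists>y. N y = k)"
  obtain y0 where y0: "N y0 = m"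
    unfolding m_def by (rule LeastI_ex[where P="\<lambda>k. \<exists>y. N y = k", elim_format]) auto
  have mle: "\<And>y. m \<le> N y" unfolding m_def by (rule Least_le) blast
  have const: "N y = m" for y
  proof -
    obtain L where L: "\<forall>y'. (\<forall>i<L. y' i = y i) \<longrightarrow> card {x. \<phi> x = y} \<le> card {x. \<phi> x = y'}"
      using fib_lsc[OF lh fib_finite[OF lh], of y] by blast
    define y' where "y' = (\<lambda>i. if i < L then y i else y0 i)"
    have "N y \<le> N y'" using L unfolding N_def y'_def by simp
    also have "N y' = N (\<lambda>i. y' (i + L))" unfolding N_def by (rule fib_tail[OF sc])
    also have "(\<lambda>i. y' (i + L)) = (\<lambda>i. y0 (i + L))" unfolding y'_def by simp
    also have "N (\<lambda>i. y0 (i + L)) = N y0" unfolding N_def by (rule fib_tail[OF sc, symmetric])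
    finally show ?thesis using y0 mle[of y] by simp
  qed
  obtain x0 :: "nat \<Rightarrow> 'a" where True by simp
  have "x0 \<in> {x. \<phi> x = \<phi> x0}" by simp
  then have "N (\<phi> x0) \<ge> 1" unfolding N_def using fib_finite[OF lh]
    by (metis One_nat_def Suc_leI card_gt_0_iff empty_iff)
  then have m1: "m \<ge> 1" using const by simp
  have "surj \<phi>"
  proof -
    have "y \<in> range \<phi>" for y
    proof -
      have "card {x. \<phi> x = y} \<ge> 1" using const[of y] m1 unfolding N_def by simp
      then obtain x where "\<phi> x = y" by (metis (mono_tags, lifting) card.empty empty_Collect_eq not_one_le_zero)
      then show ?thesis by blast
    qed
    then show ?thesis by blast
  qed
  then show ?thesis using m1 const fib_finite[OF lh] unfolding N_def by blast
qed

end
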